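(* Let $0\le\alpha<n$, $m$ a nonnegative integer, $0<\eta\le1$, $0<\delta<\min\{\eta,(n-\alpha)/m\}$, $1\le r\le\infty$, $\tilde\alpha=m\delta+\alpha$, $\tilde\delta\le\delta$. If $(w,v)\in\mathbb{H}(r,\tilde\alpha,\tilde\delta)$, then there is $C>0$ such that for every ball $B$, $$\|v\chi_{2B}\|_{L^{r'}}\le C\,|B|^{(\tilde\delta-\tilde\alpha)/n}\,w(B).$$
   Context: A weight is a nonnegative locally integrable function; $w(B)=\int_Bw$; $x_B$ is the center of $B$ and $2B$ the concentric ball with twice the radius; $r'$ is the conjugate exponent. $(w,v)\in\mathbb{H}(r,\tilde\alpha,\tilde\delta)$ means that for some $C$ and every ball $B$: if $1<r\le\infty$, $|B|^{(\delta-\tilde\delta)/n}\big(\int\frac{v^{r'}(y)}{(|B|^{1/n}+|x_B-y|)^{r'(n-\tilde\alpha+\delta)}}dy\big)^{1/r'}\le C\frac{w(B)}{|B|}$; if $r=1$, $|B|^{(\delta-\tilde\delta)/n}\big\|\frac{v(\cdot)}{(|B|^{1/n}+|x_B-\cdot|)^{n-\tilde\alpha+\delta}}\big\|_\infty\le C\frac{w(B)}{|B|}$. If $m=0$, $(n-\alpha)/m$ is read as $+\infty$. *)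

theory Defs
  imports "HOL-Analysis.Analysis" "HOL-Probability.Essential_Supremum"
begin

definition weight :: "('a::euclidean_space \<Rightarrow> real) \<Rightarrow> bool" where
  "weight w \<longleftrightarrow> (\<forall>x. 0 \<le> w x) \<and> (\<forall>K. compact K \<longrightarrow> set_integrable lborel K w)"

definition wmeas :: "('a::euclidean_space \<Rightarrow> real) \<Rightarrow> 'a set \<Rightarrow> real" where
  "wmeas w B = (LINT y:B|lborel. w y)"

definition conj_exp :: "ereal \<Rightarrow> ereal" where
  "conj_exp r = (if r = 1 then \<infinity> else if r = \<infinity> then 1 else r / (r - 1))"

definition enn_root :: "real \<Rightarrow> ennreal \<Rightarrow> ennreal" where
  "enn_root p x = (if x = \<infinity> then \<infinity> else ennreal (enn2real x powr (1 / p)))"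

definition Lnorm :: "ereal \<Rightarrow> ('a::euclidean_space \<Rightarrow> real) \<Rightarrow> ennreal" where
  "Lnorm p f = (if p = \<infinity> then esssup lborel (\<lambda>x. ennreal \<bar>f x\<bar>)
     else enn_root (real_of_ereal p) (\<integral>\<^sup>+ x. ennreal (\<bar>f x\<bar> powr real_of_ereal p) \<partial>lborel))"

text \<open>The class H(r, alpha~, delta~) (which also depends on delta).  The weighted
  integral in the definition equals the L^{r'} norm of
  y |-> v y / (|B|^{1/n} + |x_B - y|)^{n - alpha~ + delta}; for r = 1 (r' = infinity)
  it is the (essential) sup norm.\<close>
definition Hclass :: "ereal \<Rightarrow> real \<Rightarrow> real \<Rightarrow> real \<Rightarrow>
    ('a::euclidean_space \<Rightarrow> real) \<Rightarrow> ('a \<Rightarrow> real) \<Rightarrow> bool" where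
  "Hclass r alt dt d w v \<longleftrightarrow> (\<exists>C::real. \<forall>x \<rho>. 0 < \<rho> \<longrightarrow>
     (let B = ball x \<rho>; mB = measure lborel B in
       ennreal (mB powr ((d - dt) / real DIM('a))) *
         Lnorm (conj_exp r) (\<lambda>y. v y / (mB powr (1 / real DIM('a)) + dist x y) powr (real DIM('a) - alt + d))
       \<le> ennreal (C * wmeas w B / mB)))"

end

theory Submission
  imports Defs
begin

lemma v_meas:
  assumes "weight (v::'a::euclidean_space \<Rightarrow> real)"
  shows "v \<in> borel_measurable lborel"
proof -
  have meas: "(\<lambda>y. indicator (cball 0 (real k)) y *\<^sub>R v y) \<in> borel_measurable lborel" for k :: nat
  proof -
    have "set_integrable lborel (cball 0 (real k)) v"
      using assms compact_cball unfolding weight_def by blast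
    then show ?thesis unfolding set_integrable_def by (rule borel_measurable_integrable)
  qed
  have lim: "(\<lambda>k. indicator (cball 0 (real k)) y *\<^sub>R v y) \<longlonglongrightarrow> v y" for y :: 'a
  proof (rule tendsto_eventually)
    obtain N :: nat where "norm y \<le> real N" using real_arch_simple by blast
    then show "\<forall>\<^sub>F k in sequentially. indicator (cball 0 (real k)) y *\<^sub>R v y = v y"
      unfolding eventually_sequentially
      by (intro exI[of _ N]) (auto simp: indicator_def dist_norm)
  qed
  show ?thesis
    by (rule borel_measurable_LIMSEQ_real[where u="\<lambda>k y. indicator (cball 0 (real k)) y *\<^sub>R v y", OF lim meas])
qed

lemma enn_root_mono:
  assumes "q > 0" "x \<le> y" shows "enn_root q x \<le> enn_root q y"
proof (cases "y = \<infinity>")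
  case True then show ?thesis by (simp add: enn_root_def)
next
  case False
  then have "x \<noteq> \<infinity>" using assms top.extremum_unique by fastforce
  then show ?thesis using False assms
    by (auto simp: enn_root_def less_top[symmetric] intro!: ennreal_leI powr_mono2 enn2real_mono)
qed

lemma enn_root_cmult:
  assumes "q > 0" "M \<ge> 0" shows "enn_root q (ennreal (M powr q) * I) = ennreal M * enn_root q I"
proof (cases "I = \<infinity>")
  case True
  then show ?thesis
  proof (cases "M = 0")
    case True then show ?thesis using \<open>I = \<infinity>\<close> by (simp add: enn_root_def)
  next
    case False then have "M > 0" using assms by auto
    then show ?thesis using True by (simp add: enn_root_def ennreal_mult_top)
  qed
next
  case False
  have "enn2real (ennreal (M powr q) * I) = M powr q * enn2real I"
    by (simp add: enn2real_mult)
  moreover have "(M powr q * enn2real I) powr (1/q) = M * enn2real I powr (1/q)"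
    using assms by (simp add: powr_mult powr_powr)
  ultimately show ?thesis using False assms
    by (simp add: enn_root_def ennreal_mult_eq_top_iff ennreal_mult)
qed

lemma Lnorm_le:
  fixes f g :: "'a::euclidean_space \<Rightarrow> real"
  assumes p: "p \<ge> 1" and f: "f \<in> borel_measurable lborel" and g: "g \<in> borel_measurable lborel"
    and M: "M \<ge> 0" and le: "\<And>y. \<bar>f y\<bar> \<le> M * \<bar>g y\<bar>"
  shows "Lnorm p f \<le> ennreal M * Lnorm p g"
proof (cases "p = \<infinity>")
  case True
  have fm: "(\<lambda>y. ennreal \<bar>f y\<bar>) \<in> borel_measurable lborel" using f by measurable
  have "AE y in lborel. ennreal \<bar>g y\<bar> \<le> esssup lborel (\<lambda>y. ennreal \<bar>g y\<bar>)" by (rule esssup_AE)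
  then have "AE y in lborel. ennreal \<bar>f y\<bar> \<le> ennreal M * esssup lborel (\<lambda>y. ennreal \<bar>g y\<bar>)"
  proof (rule AE_mp, intro AE_I2 impI)
    fix y assume "ennreal \<bar>g y\<bar> \<le> esssup lborel (\<lambda>y. ennreal \<bar>g y\<bar>)"
    then have "ennreal M * ennreal \<bar>g y\<bar> \<le> ennreal M * esssup lborel (\<lambda>y. ennreal \<bar>g y\<bar>)"
      by (rule mult_left_mono) simp
    moreover have "ennreal \<bar>f y\<bar> \<le> ennreal M * ennreal \<bar>g y\<bar>"
      using le M by (simp add: ennreal_mult[symmetric] ennreal_leI)
    ultimately show "ennreal \<bar>f y\<bar> \<le> ennreal M * esssup lborel (\<lambda>y. ennreal \<bar>g y\<bar>)"
      by (rule order_trans[rotated])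
  qed
  then show ?thesis using True fm unfolding Lnorm_def by (simp add: esssup_I)
next
  case False
  then obtain q where q: "p = ereal q" "q \<ge> 1" using p by (cases p) auto
  have gm: "(\<lambda>y. ennreal (\<bar>g y\<bar> powr q)) \<in> borel_measurable lborel" using g by measurable
  have "(\<integral>\<^sup>+ y. ennreal (\<bar>f y\<bar> powr q) \<partial>lborel) \<le> (\<integral>\<^sup>+ y. ennreal (M powr q) * ennreal (\<bar>g y\<bar> powr q) \<partial>lborel)"
  proof (rule nn_integral_mono)
    fix y
    have "\<bar>f y\<bar> powr q \<le> (M * \<bar>g y\<bar>) powr q"
      using q le by (intro powr_mono2) auto
    also have "\<dots> = M powr q * \<bar>g y\<bar> powr q" using M by (simp add: powr_mult)
    finally show "ennreal (\<bar>f y\<bar> powr q) \<le> ennreal (M powr q) * ennreal (\<bar>g y\<bar> powr q)"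
      by (simp add: ennreal_mult[symmetric] ennreal_leI)
  qed
  also have "\<dots> = ennreal (M powr q) * (\<integral>\<^sup>+ y. ennreal (\<bar>g y\<bar> powr q) \<partial>lborel)"
    using gm by (rule nn_integral_cmult)
  finally have "enn_root q (\<integral>\<^sup>+ y. ennreal (\<bar>f y\<bar> powr q) \<partial>lborel)
      \<le> enn_root q (ennreal (M powr q) * (\<integral>\<^sup>+ y. ennreal (\<bar>g y\<bar> powr q) \<partial>lborel))"
    using q by (intro enn_root_mono) auto
  also have "\<dots> = ennreal M * enn_root q (\<integral>\<^sup>+ y. ennreal (\<bar>g y\<bar> powr q) \<partial>lborel)"
    using q M by (intro enn_root_cmult) auto
  finally show ?thesis using q unfolding Lnorm_def by simp
qed

lemma conj_exp_ge1:
  assumes "1 \<le> r" shows "1 \<le> conj_exp r"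
proof (cases r)
  case (real t)
  show ?thesis
  proof (cases "t = 1")
    case True then show ?thesis using real by (simp add: conj_exp_def)
  next
    case False
    then have "t > 1" using assms real by auto
    then have "ereal t / (ereal t - 1) = ereal (t / (t - 1))"
      by (simp add: divide_ereal_def one_ereal_def divide_inverse)
    moreover have "1 \<le> t / (t - 1)" using \<open>t > 1\<close> by (simp add: le_divide_eq)
    moreover have "conj_exp r = ereal t / (ereal t - 1)"
      using real False unfolding conj_exp_def by (simp add: one_ereal_def)
    ultimately show ?thesis by (simp add: one_ereal_def)
  qed
next
  case PInf then show ?thesis by (simp add: conj_exp_def)
next
  case MInf then show ?thesis using assms by simp
qed

theorem lemma3p1:
  fixes w v :: "'a::euclidean_space \<Rightarrow> real"
    and \<alpha> \<eta> \<delta> \<delta>t :: real and m :: nat and r :: ereal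
  assumes "0 \<le> \<alpha>" "\<alpha> < real DIM('a)"
    and "0 < \<eta>" "\<eta> \<le> 1"
    and "0 < \<delta>" "\<delta> < \<eta>" "m = 0 \<or> \<delta> < (real DIM('a) - \<alpha>) / real m"
    and "1 \<le> r"
    and "\<delta>t \<le> \<delta>"
    and "weight w" "weight v"
    and "Hclass r (real m * \<delta> + \<alpha>) \<delta>t \<delta> w v"
  shows "\<exists>C>0. \<forall>x \<rho>. 0 < \<rho> \<longrightarrow>
    Lnorm (conj_exp r) (\<lambda>y. v y * indicator (ball x (2 * \<rho>)) y)
      \<le> ennreal (C * measure lborel (ball x \<rho>) powr ((\<delta>t - (real m * \<delta> + \<alpha>)) / real DIM('a))
                 * wmeas w (ball x \<rho>))"
proof -
  define n where "n = real DIM('a)"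
  have n0: "n > 0" unfolding n_def by simp
  define alt where "alt = real m * \<delta> + \<alpha>"
  define e where "e = n - alt + \<delta>"
  have e0: "e > 0"
  proof (cases "m = 0")
    case True then show ?thesis using assms(2,5) by (simp add: e_def alt_def n_def)
  next
    case False
    then have "\<delta> * real m < real DIM('a) - \<alpha>" using assms(7)
      by (simp add: pos_less_divide_eq)
    then show ?thesis using assms(5) by (simp add: e_def alt_def n_def algebra_simps)
  qed
  define cU where "cU = unit_ball_vol (real DIM('a))"
  have cU0: "cU > 0" unfolding cU_def by simp
  define K where "K = 1 + 2 / cU powr (1/n)"
  have K0: "K > 0" unfolding K_def using cU0 by (simp add: add_pos_nonneg)
  obtain C where HC: "\<And>x \<rho>. 0 < \<rho> \<Longrightarrow>
       ennreal (measure lborel (ball x \<rho>) powr ((\<delta> - \<delta>t) / n)) *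
         Lnorm (conj_exp r) (\<lambda>y. v y / (measure lborel (ball x \<rho>) powr (1 / n) + dist x y) powr e)
       \<le> ennreal (C * wmeas w (ball x \<rho>) / measure lborel (ball x \<rho>))"
    using assms(12) unfolding Hclass_def Let_def n_def e_def alt_def by blast
  define C0 where "C0 = max C 1"
  have C01: "C0 \<ge> 1" unfolding C0_def by simp
  have vm: "v \<in> borel_measurable lborel" using assms(11) by (rule v_meas)
  have r1: "1 \<le> conj_exp r" using assms(8) by (rule conj_exp_ge1)
  show ?thesis
  proof (intro exI[of _ "K powr e * C0"] conjI allI impI)
    show "0 < K powr e * C0" using K0 C01 by simp
    fix x :: 'a and \<rho> :: real
    assume \<rho>: "0 < \<rho>"
    define mB where "mB = measure lborel (ball x \<rho>)"
    define wB where "wB = wmeas w (ball x \<rho>)"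
    have mB: "mB = cU * \<rho> ^ DIM('a)" unfolding mB_def cU_def using \<rho> by (simp add: content_ball)
    have mB0: "mB > 0" using mB cU0 \<rho> by simp
    have wB0: "wB \<ge> 0" using assms(10) unfolding wB_def wmeas_def set_lebesgue_integral_def weight_def
      by (intro Bochner_Integration.integral_nonneg) (simp add: indicator_def)
    define a where "a = mB powr (1/n)"
    have a: "a = cU powr (1/n) * \<rho>"
    proof -
      have "(\<rho> ^ DIM('a)) powr (1/n) = \<rho>"
        using \<rho> n0 by (simp add: powr_realpow[symmetric] powr_powr n_def)
      then show ?thesis unfolding a_def mB using cU0 \<rho> by (simp add: powr_mult)
    qed
    have a0: "a > 0" unfolding a_def using mB0 by simp
    have Ka: "K * a = a + 2 * \<rho>" unfolding K_def a using cU0 by (simp add: field_simps)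
    define g where "g = (\<lambda>y. v y / (a + dist x y) powr e)"
    define f where "f = (\<lambda>y. v y * indicator (ball x (2 * \<rho>)) y)"
    define M where "M = (K * a) powr e"
    have M0: "M \<ge> 0" unfolding M_def by simp
    have gm: "g \<in> borel_measurable lborel" unfolding g_def using vm by measurable
    have fm: "f \<in> borel_measurable lborel" unfolding f_def using vm by (intro borel_measurable_times borel_measurable_indicator) auto
    have le: "\<bar>f y\<bar> \<le> M * \<bar>g y\<bar>" for y
    proof (cases "y \<in> ball x (2 * \<rho>)")
      case True
      have D0: "a + dist x y > 0" using a0 by (simp add: add_pos_nonneg)
      have "(a + dist x y) powr e \<le> M"
        unfolding M_def Ka using True e0 D0 by (intro powr_mono2) auto
      moreover have "\<bar>f y\<bar> = \<bar>g y\<bar> * (a + dist x y) powr e"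
        using True D0 unfolding f_def g_def by (simp add: abs_mult)
      ultimately show ?thesis
        by (metis abs_ge_zero mult.commute mult_right_mono)
    next
      case False then show ?thesis unfolding f_def using M0 by simp
    qed
    have L1: "Lnorm (conj_exp r) f \<le> ennreal M * Lnorm (conj_exp r) g"
      by (rule Lnorm_le[OF r1 fm gm M0 le])
    define s where "s = mB powr ((\<delta> - \<delta>t) / n)"
    have s0: "s > 0" unfolding s_def using mB0 by simp
    have "ennreal s * Lnorm (conj_exp r) g \<le> ennreal (C * wB / mB)"
      using HC[OF \<rho>] unfolding s_def mB_def wB_def g_def a_def by simp
    also have "\<dots> \<le> ennreal (C0 * wB / mB)"
      using wB0 mB0 unfolding C0_def by (intro ennreal_leI divide_right_mono mult_right_mono) auto
    finally have H: "ennreal s * Lnorm (conj_exp r) g \<le> ennreal (C0 * wB / mB)" .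
    have "Lnorm (conj_exp r) g = ennreal (1/s) * (ennreal s * Lnorm (conj_exp r) g)"
      using s0 by (simp add: mult.assoc[symmetric] ennreal_mult[symmetric])
    also have "\<dots> \<le> ennreal (1/s) * ennreal (C0 * wB / mB)"
      using H by (rule mult_left_mono) simp
    also have "\<dots> = ennreal (1/s * (C0 * wB / mB))"
      using s0 C01 wB0 mB0 by (intro ennreal_mult[symmetric]) auto
    also have "1/s * (C0 * wB / mB) = C0 * wB / mB / s" by simp
    finally have L2: "Lnorm (conj_exp r) g \<le> ennreal (C0 * wB / mB / s)" .
    have "Lnorm (conj_exp r) f \<le> ennreal M * ennreal (C0 * wB / mB / s)"
      using L1 L2 by (meson order_trans mult_left_mono zero_le)
    also have "\<dots> = ennreal (M * (C0 * wB / mB / s))"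
      using M0 s0 C01 wB0 mB0 by (intro ennreal_mult[symmetric]) auto
    also have "M * (C0 * wB / mB / s) = K powr e * C0 * mB powr ((\<delta>t - alt) / n) * wB"
    proof -
      have ex: "e / n = (\<delta>t - alt) / n + 1 + (\<delta> - \<delta>t) / n"
        using n0 unfolding e_def by (simp add: field_simps)
      have "M = K powr e * mB powr (e / n)"
        unfolding M_def a_def using K0 mB0 by (simp add: powr_mult powr_powr)
      also have "mB powr (e / n) = mB powr ((\<delta>t - alt) / n) * mB * s"
        unfolding ex s_def using mB0 by (simp add: powr_add)
      finally show ?thesis using mB0 s0 by (simp add: field_simps)
    qed
    finally show "Lnorm (conj_exp r) (\<lambda>y. v y * indicator (ball x (2 * \<rho>)) y)
      \<le> ennreal (K powr e * C0 * measure lborel (ball x \<rho>) powr ((\<delta>t - (real m * \<delta> + \<alpha>)) / real DIM('a))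
                 * wmeas w (ball x \<rho>))"
      unfolding f_def mB_def wB_def alt_def n_def .
  qed
qed

end
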